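(* Let $q=3^k$ for a positive integer $k$, let $n$ be a positive integer and $j\in\{0,1,\dots,n\}$. Let $A\subseteq \mathbb{F}_q^n$ be a set such that every element of $A$ has exactly $j$ coordinates equal to zero, and such that for any three distinct elements $x,y,z\in A$ we have $xy+yz+zx\neq 0$ in $\mathbb{F}_q^n$ (coordinatewise products). Define $$P(x,y,z)=\prod_{i=1}^{n} \left(1-(x_iy_i+y_iz_i+z_ix_i)^{q-1}\right)\in\mathbb{F}_q.$$ Then for $x,y,z\in A$, $P(x,y,z)\neq 0$ if and only if $x=y=z$.
   Context: For $x\in\mathbb{F}_q^n$, $x_i$ denotes its $i$-th coordinate. *)

theory Defs
  imports "HOL-Analysis.Finite_Cartesian_Product"
begin

definition vmul :: "'a::field ^ 'n \<Rightarrow> 'a ^ 'n \<Rightarrow> 'a ^ 'n" where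
  "vmul x y = (\<chi> i. x $ i * y $ i)"

definition Ppoly :: "nat \<Rightarrow> 'a::field ^ 'n \<Rightarrow> 'a ^ 'n \<Rightarrow> 'a ^ 'n \<Rightarrow> 'a" where
  "Ppoly q x y z = (\<Prod>i\<in>UNIV. 1 - (x $ i * y $ i + y $ i * z $ i + z $ i * x $ i) ^ (q - 1))"

end

theory Submission
  imports Defs "HOL-Number_Theory.Number_Theory"
begin

lemma fermat_ff:
  fixes x :: "'a::{field,finite}"
  assumes "x \<noteq> 0"
  shows "x ^ (CARD('a) - 1) = 1"
proof -
  have "(\<Prod>y\<in>UNIV-{0}. x * y) = x ^ card (UNIV - {0::'a}) * \<Prod>(UNIV-{0::'a})"
    by (simp add: prod.distrib)
  also have "card (UNIV - {0::'a}) = CARD('a) - 1"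
    by (simp add: card_Diff_subset)
  finally have e: "(\<Prod>y\<in>UNIV-{0}. x * y) = x ^ (CARD('a) - 1) * \<Prod>(UNIV-{0::'a})" .
  have "(\<Prod>y\<in>UNIV-{0}. x * y) = (\<Prod>y\<in>UNIV-{0::'a}. y)"
    by (rule prod.reindex_bij_witness[of _ "\<lambda>y. y / x" "\<lambda>y. x * y"]) (use assms in auto)
  moreover have "\<Prod>(UNIV-{0::'a}) \<noteq> 0" by simp
  ultimately show ?thesis using e by simp
qed

lemma char3:
  assumes "CARD('a::{field,finite}) = 3 ^ k" "k > 0"
  shows "(3::'a) = 0"
proof -
  have pos: "CHAR('a) > 0" by (simp add: finite_imp_CHAR_pos)
  have pr: "prime CHAR('a)" using prime_CHAR_semidom[OF pos] .
  have "CHAR('a) dvd 3 ^ k" using CHAR_dvd_CARD[where 'a='a] assms by simp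
  then have "CHAR('a) dvd 3" using pr prime_dvd_power_nat by blast
  then have "CHAR('a) = 3" using pr
    using primes_dvd_imp_eq[of "CHAR('a)" 3] by simp
  then have "of_nat 3 = (0::'a)" by (metis of_nat_CHAR)
  then show ?thesis by simp
qed

theorem lemma4p7:
  fixes A :: "('a::{field,finite} ^ 'n) set"
    and k q j :: nat
  assumes "k > 0"
    and "q = 3 ^ k"
    and "CARD('a) = q"
    and "j \<le> CARD('n)"
    and "\<forall>x\<in>A. card {i. x $ i = 0} = j"
    and "\<forall>x\<in>A. \<forall>y\<in>A. \<forall>z\<in>A. x \<noteq> y \<and> y \<noteq> z \<and> x \<noteq> z \<longrightarrow>
           vmul x y + vmul y z + vmul z x \<noteq> 0"
  shows "\<forall>x\<in>A. \<forall>y\<in>A. \<forall>z\<in>A. (Ppoly q x y z \<noteq> 0 \<longleftrightarrow> x = y \<and> y = z)"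
proof -
  have three: "(3::'a) = 0" using char3 assms(1-3) by blast
  have pw: "(a::'a) ^ (q - 1) = (if a = 0 then 0 else 1)" for a
  proof (cases "a = 0")
    case True
    have "(3::nat) ^ 1 \<le> 3 ^ k" using assms(1) by (intro power_increasing) auto
    then have "q - 1 > 0" using assms(2) by simp
    then show ?thesis using True by simp
  next
    case False then show ?thesis using fermat_ff[OF False] assms(3) by simp
  qed
  have P: "Ppoly q x y z \<noteq> 0 \<longleftrightarrow> vmul x y + vmul y z + vmul z x = 0" for x y z :: "'a ^ 'n"
  proof -
    have "Ppoly q x y z = (\<Prod>i\<in>UNIV. if x $ i * y $ i + y $ i * z $ i + z $ i * x $ i = 0 then 1 else 0)"
      unfolding Ppoly_def by (rule prod.cong[OF refl], subst pw, simp)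
    also have "\<dots> \<noteq> 0 \<longleftrightarrow> (\<forall>i. x $ i * y $ i + y $ i * z $ i + z $ i * x $ i = 0)"
      by (auto simp: prod_zero_iff split: if_splits)
    also have "\<dots> \<longleftrightarrow> vmul x y + vmul y z + vmul z x = 0"
      by (auto simp: vmul_def vec_eq_iff)
    finally show ?thesis .
  qed
  have key: "x = z" if xA: "x \<in> A" and zA: "z \<in> A" and h: "vmul x x + vmul x z + vmul z x = 0" for x z
  proof -
    have c: "x $ i = 0 \<or> x $ i = z $ i" for i
    proof -
      have "x $ i * x $ i + x $ i * z $ i + z $ i * x $ i = 0"
        using h by (auto simp: vmul_def vec_eq_iff)
      then have "x $ i * (x $ i + 2 * z $ i) = 0" by (simp add: algebra_simps)
      moreover have "x $ i + 2 * z $ i = x $ i - z $ i"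
      proof -
        have "x $ i + 2 * z $ i = x $ i - z $ i + 3 * z $ i" by (simp add: algebra_simps)
        then show ?thesis using three by simp
      qed
      ultimately show ?thesis by auto
    qed
    have sub: "{i. z $ i = 0} \<subseteq> {i. x $ i = 0}" using c by (metis (mono_tags) mem_Collect_eq subsetI)
    have "card {i. z $ i = 0} = card {i. x $ i = 0}" using assms(5) xA zA by simp
    then have "{i. z $ i = 0} = {i. x $ i = 0}"
      using sub by (intro card_subset_eq) auto
    then show ?thesis using c by (metis (mono_tags) mem_Collect_eq vec_eq_iff)
  qed
  have vc: "vmul a b = vmul b a" for a b :: "'a ^ 'n" by (simp add: vmul_def mult.commute)
  show ?thesis
  proof (intro ballI)
    fix x y z assume xA: "x \<in> A" and yA: "y \<in> A" and zA: "z \<in> A"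
    show "Ppoly q x y z \<noteq> 0 \<longleftrightarrow> x = y \<and> y = z"
    proof
      assume "Ppoly q x y z \<noteq> 0"
      then have h: "vmul x y + vmul y z + vmul z x = 0" using P by blast
      show "x = y \<and> y = z"
      proof (cases "x = y")
        case True
        then show ?thesis using key[OF yA zA] h by auto
      next
        case xy: False
        show ?thesis
        proof (cases "y = z")
          case True
          then have "vmul z z + vmul z x + vmul x z = 0" using h vc by (simp add: algebra_simps)
          then have "z = x" using key[OF zA xA] by blast
          then show ?thesis using True xy by simp
        next
          case yz: False
          show ?thesis
          proof (cases "x = z")
            case True
            then have "vmul x x + vmul x y + vmul y x = 0" using h vc by (simp add: algebra_simps)
            then have "x = y" using key[OF xA yA] by blast
            then show ?thesis using xy by simp
          next
            case False
            then show ?thesis using assms(6) xA yA zA xy yz h by blast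
          qed
        qed
      qed
    next
      assume "x = y \<and> y = z"
      then have "vmul x y + vmul y z + vmul z x = 3 * vmul x x"
        by (simp add: vmul_def vec_eq_iff algebra_simps)
      moreover have "(3::'a ^ 'n) = 0" using three by (simp add: vec_eq_iff)
      ultimately show "Ppoly q x y z \<noteq> 0" using P by simp
    qed
  qed
qed

end
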